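(* Let $X_1,\dots,X_n$ be random variables with mean zero and finite variances $\mathrm{Var}(X_i)=\sigma_i^2>0$, and for each $i$ let $(X_1^{*(i)},\dots,X_n^{*(i)})$ have the directional zero bias distribution in direction $i$. Then: 1. $X_i^{*(i)}$ has the same distribution as $X_i^*$, the zero bias transform of $X_i$. 2. If the random vector $(X_1,\dots,X_n)$ has a density, then $X_j^{*(i)}$ has density $f_j^{*(i)}(y)=\int \frac{x_i^2}{\sigma_i^2}f_{ij}(x_i,y)\,dx_i$, where $f_{ij}$ is the joint density of $(X_i,X_j)$. 3. If $X_i$ is independent of $X_j$, then $X_j^{*(i)}$ has the same distribution as $X_j$. 4. $(aX_j)^{*(i)}=aX_j^{*(i)}$ for any constant $a\ne0$.
   Context: Zero bias transform: for $X$ with mean zero and finite variance $\sigma^2$, $X^*$ has the zero bias distribution of $X$ if $\mathbb{E}[Xf(X)]=\sigma^2\mathbb{E}[f'(X^* )]$ for all absolutely continuous $f$ for which the expectations exist. Directional zero bias transform: the directional zero bias distribution in direction $i$ is the law of a random vector $(X_1^{*(i)},\dots,X_n^{*(i)})$ satisfying $\mathbb{E}[X_if(X_1,\dots,X_n)]=\sigma_i^2\mathbb{E}[\partial_if(X_1^{*(i)},\dots,X_n^{*(i)})]$ for all real functions $f$ of $n$ variables for which the expectations exist. In item 4, $(aX_j)^{*(i)}$ denotes the $j$-th coordinate of the direction-$i$ transform of the vector obtained by replacing $X_j$ with $aX_j$. *)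

theory Defs
  imports "HOL-Probability.Probability"
begin

text \<open>Variance of a real random variable X on M (literally the library's
  prob_space.variance, written out since that is a locale abbreviation).\<close>
definition var :: "'a measure \<Rightarrow> ('a \<Rightarrow> real) \<Rightarrow> real" where
  "var M X = (\<integral>\<omega>. (X \<omega> - (\<integral>\<omega>'. X \<omega>' \<partial>M))\<^sup>2 \<partial>M)"

definition upd :: "real ^ 'n \<Rightarrow> 'n \<Rightarrow> real \<Rightarrow> real ^ 'n" where
  "upd x i t = (\<chi> k. if k = i then t else x $ k)"

definition zero_bias :: "'a measure \<Rightarrow> ('a \<Rightarrow> real) \<Rightarrow> 'b measure \<Rightarrow> ('b \<Rightarrow> real) \<Rightarrow> bool" where
  "zero_bias M X N Z \<longleftrightarrow> Z \<in> borel_measurable N \<and>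
     (\<forall>f f'. f \<in> borel_measurable borel \<longrightarrow> f' \<in> borel_measurable borel \<longrightarrow>
        (\<forall>x. (f has_real_derivative f' x) (at x)) \<longrightarrow>
        integrable M (\<lambda>\<omega>. X \<omega> * f (X \<omega>)) \<longrightarrow>
        integrable N (\<lambda>\<omega>. f' (Z \<omega>)) \<longrightarrow>
        (\<integral>\<omega>. X \<omega> * f (X \<omega>) \<partial>M) = var M X * (\<integral>\<omega>. f' (Z \<omega>) \<partial>N))"

definition dir_zero_bias ::
  "'a measure \<Rightarrow> ('n::finite \<Rightarrow> 'a \<Rightarrow> real) \<Rightarrow> 'n \<Rightarrow> 'b measure \<Rightarrow> ('b \<Rightarrow> real ^ 'n) \<Rightarrow> bool" where
  "dir_zero_bias M X i N Y \<longleftrightarrow> Y \<in> borel_measurable N \<and>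
     (\<forall>f f'. f \<in> borel_measurable borel \<longrightarrow> f' \<in> borel_measurable borel \<longrightarrow>
        (\<forall>x. ((\<lambda>t. f (upd x i t)) has_real_derivative f' x) (at (x $ i))) \<longrightarrow>
        integrable M (\<lambda>\<omega>. X i \<omega> * f (\<chi> k. X k \<omega>)) \<longrightarrow>
        integrable N (\<lambda>\<omega>. f' (Y \<omega>)) \<longrightarrow>
        (\<integral>\<omega>. X i \<omega> * f (\<chi> k. X k \<omega>) \<partial>M) = var M (X i) * (\<integral>\<omega>. f' (Y \<omega>) \<partial>N))"

end

theory Submission
  imports Defs
begin


lemma var_mean0: "(\<integral>\<omega>. X \<omega> \<partial>M) = 0 \<Longrightarrow> var M X = (\<integral>\<omega>. (X \<omega>)\<^sup>2 \<partial>M)"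
  by (simp add: var_def)

lemma prob_distr_eqI:
  fixes M :: "'a measure" and N :: "'b measure"
  assumes "prob_space M" "prob_space N" "X \<in> borel_measurable M" "Z \<in> borel_measurable N"
    and "\<And>A. A \<in> sets borel \<Longrightarrow> measure (distr M borel X) A = measure (distr N borel Z) A"
  shows "distr M borel X = distr N borel (Z :: _ \<Rightarrow> real)"
proof (rule measure_eqI)
  interpret P1: prob_space "distr M borel X" by (rule prob_space.prob_space_distr) (use assms in auto)
  interpret P2: prob_space "distr N borel Z" by (rule prob_space.prob_space_distr) (use assms in auto)
  show "sets (distr M borel X) = sets (distr N borel Z)" by simp
  fix A assume "A \<in> sets (distr M borel X)"
  then show "emeasure (distr M borel X) A = emeasure (distr N borel Z) A"
    using assms(5)[of A] by (simp add: P1.emeasure_eq_measure P2.emeasure_eq_measure)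
qed

lemma dzb_coord:
  fixes M :: "'a measure" and X :: "'n::finite \<Rightarrow> 'a \<Rightarrow> real"
    and i :: 'n and N :: "'b measure" and Y :: "'b \<Rightarrow> real ^ 'n"
  assumes Y: "dir_zero_bias M X i N Y" and N: "prob_space N" and ji: "j \<noteq> i"
   and mi: "X i \<in> borel_measurable M" and mj: "X j \<in> borel_measurable M"
   and sq: "integrable M (\<lambda>\<omega>. (X i \<omega>)\<^sup>2)" and A: "A \<in> sets borel"
  shows "(\<integral>\<omega>. (X i \<omega>)\<^sup>2 * indicator A (X j \<omega>) \<partial>M)
     = var M (X i) * measure (distr N borel (\<lambda>\<omega>. Y \<omega> $ j)) A"
proof -
  interpret N: prob_space N by (rule N)
  define f where "f = (\<lambda>x::real^'n. x$i * indicator A (x$j) :: real)"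
  define f' where "f' = (\<lambda>x::real^'n. indicator A (x$j) :: real)"
  have fm: "f \<in> borel_measurable borel" unfolding f_def using A by measurable
  have f'm: "f' \<in> borel_measurable borel" unfolding f'_def using A by measurable
  have Ym: "Y \<in> borel_measurable N" using Y by (simp add: dir_zero_bias_def)
  have Yjm: "(\<lambda>\<omega>. Y \<omega> $ j) \<in> borel_measurable N" using measurable_compose[OF Ym borel_measurable_nth] .
  have der: "\<forall>x. ((\<lambda>t. f (upd x i t)) has_real_derivative f' x) (at (x $ i))"
    using ji by (auto simp: f_def f'_def upd_def intro!: derivative_eq_intros)
  have e1: "(\<lambda>\<omega>. X i \<omega> * f (\<chi> k. X k \<omega>)) = (\<lambda>\<omega>. (X i \<omega>)\<^sup>2 * indicator A (X j \<omega>))"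
    by (simp add: f_def power2_eq_square mult.assoc)
  have int1: "integrable M (\<lambda>\<omega>. X i \<omega> * f (\<chi> k. X k \<omega>))"
    unfolding e1
    by (rule Bochner_Integration.integrable_bound[OF sq]) (use A mi mj in \<open>auto simp: indicator_def\<close>)
  have int2: "integrable N (\<lambda>\<omega>. f' (Y \<omega>))"
    by (rule N.integrable_const_bound[where B=1]) (use f'm Ym in \<open>auto simp: f'_def indicator_def\<close>)
  have "(\<integral>\<omega>. X i \<omega> * f (\<chi> k. X k \<omega>) \<partial>M) = var M (X i) * (\<integral>\<omega>. f' (Y \<omega>) \<partial>N)"
    using Y fm f'm der int1 int2 unfolding dir_zero_bias_def by blast
  moreover have "(\<integral>\<omega>. f' (Y \<omega>) \<partial>N) = measure (distr N borel (\<lambda>\<omega>. Y \<omega> $ j)) A"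
  proof -
    have "(\<integral>\<omega>. f' (Y \<omega>) \<partial>N) = (\<integral>x. indicator A x \<partial>distr N borel (\<lambda>\<omega>. Y \<omega> $ j))"
      by (subst integral_distr) (use Yjm A in \<open>auto simp: f'_def\<close>)
    also have "\<dots> = measure (distr N borel (\<lambda>\<omega>. Y \<omega> $ j)) A" by simp
    finally show ?thesis .
  qed
  ultimately show ?thesis using e1 by simp
qed



lemma char_distr_Re:
  assumes L: "prob_space L" and Z: "Z \<in> borel_measurable L"
  shows "Re (char (distr L borel Z) t) = (\<integral>\<omega>. cos (t * Z \<omega>) \<partial>L)"
    and "Im (char (distr L borel Z) t) = (\<integral>\<omega>. sin (t * Z \<omega>) \<partial>L)"
proof -
  interpret L: prob_space L by (rule L)
  have ch: "char (distr L borel Z) t = (\<integral>\<omega>. iexp (t * Z \<omega>) \<partial>L)"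
    unfolding char_def by (subst integral_distr) (use Z in auto)
  have int: "integrable L (\<lambda>\<omega>. iexp (t * Z \<omega>))"
    by (rule L.integrable_const_bound[where B=1]) (use Z in \<open>auto simp: norm_exp_i_times\<close>)
  show "Re (char (distr L borel Z) t) = (\<integral>\<omega>. cos (t * Z \<omega>) \<partial>L)"
    unfolding ch using integral_Re[OF int] by (simp add: Re_exp)
  show "Im (char (distr L borel Z) t) = (\<integral>\<omega>. sin (t * Z \<omega>) \<partial>L)"
    unfolding ch using integral_Im[OF int] by (simp add: Im_exp)
qed

lemma zb_trig:
  assumes ZB: "zero_bias M X L Z" and L: "prob_space L" and M: "prob_space M"
    and Xm: "X \<in> borel_measurable M" and sq: "integrable M (\<lambda>\<omega>. (X \<omega>)\<^sup>2)" and t: "t \<noteq> 0"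
  shows "(\<integral>\<omega>. X \<omega> * (sin (t * X \<omega>) / t) \<partial>M) = var M X * (\<integral>\<omega>. cos (t * Z \<omega>) \<partial>L)"
    and "(\<integral>\<omega>. X \<omega> * (- cos (t * X \<omega>) / t) \<partial>M) = var M X * (\<integral>\<omega>. sin (t * Z \<omega>) \<partial>L)"
proof -
  interpret L: prob_space L by (rule L)
  interpret M: prob_space M by (rule M)
  have Zm: "Z \<in> borel_measurable L" using ZB by (simp add: zero_bias_def)
  have Xint: "integrable M X" using M.square_integrable_imp_integrable[OF Xm sq] .
  have intX: "integrable M (\<lambda>\<omega>. X \<omega> * g (t * X \<omega>) / t)" if g: "\<And>y. \<bar>g y\<bar> \<le> 1" and gm: "g \<in> borel_measurable borel" for g :: "real \<Rightarrow> real"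
  proof (rule Bochner_Integration.integrable_bound[where f="\<lambda>\<omega>. X \<omega> / t"])
    show "integrable M (\<lambda>\<omega>. X \<omega> / t)" using Xint by simp
    show "(\<lambda>\<omega>. X \<omega> * g (t * X \<omega>) / t) \<in> borel_measurable M" using Xm gm by measurable
    show "AE x in M. norm (X x * g (t * X x) / t) \<le> norm (X x / t)"
      using g by (auto simp: abs_mult divide_simps intro!: mult_left_le)
  qed
  have "(\<lambda>x. sin (t * x) / t) \<in> borel_measurable borel" by measurable
  moreover have "(\<lambda>x. cos (t * x)) \<in> borel_measurable borel" by measurable
  moreover have "\<forall>x. ((\<lambda>x. sin (t * x) / t) has_real_derivative cos (t * x)) (at x)"
    using t by (auto intro!: derivative_eq_intros)
  moreover have "integrable M (\<lambda>\<omega>. X \<omega> * (sin (t * X \<omega>) / t))"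
    using intX[of sin] by simp
  moreover have "integrable L (\<lambda>\<omega>. cos (t * Z \<omega>))"
    by (rule L.integrable_const_bound[where B=1]) (use Zm in auto)
  ultimately show "(\<integral>\<omega>. X \<omega> * (sin (t * X \<omega>) / t) \<partial>M) = var M X * (\<integral>\<omega>. cos (t * Z \<omega>) \<partial>L)"
    using ZB unfolding zero_bias_def by blast
  have "(\<lambda>x. - cos (t * x) / t) \<in> borel_measurable borel" by measurable
  moreover have "(\<lambda>x. sin (t * x)) \<in> borel_measurable borel" by measurable
  moreover have "\<forall>x. ((\<lambda>x. - cos (t * x) / t) has_real_derivative sin (t * x)) (at x)"
    using t by (auto intro!: derivative_eq_intros)
  moreover have "integrable M (\<lambda>\<omega>. X \<omega> * (- cos (t * X \<omega>) / t))"
    using intX[of "\<lambda>y. - cos y"] by simp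
  moreover have "integrable L (\<lambda>\<omega>. sin (t * Z \<omega>))"
    by (rule L.integrable_const_bound[where B=1]) (use Zm in auto)
  ultimately show "(\<integral>\<omega>. X \<omega> * (- cos (t * X \<omega>) / t) \<partial>M) = var M X * (\<integral>\<omega>. sin (t * Z \<omega>) \<partial>L)"
    using ZB unfolding zero_bias_def by blast
qed

lemma zb_unique:
  assumes Z1: "zero_bias M X L1 Z1" and L1: "prob_space L1"
    and Z2: "zero_bias M X L2 Z2" and L2: "prob_space L2" and M: "prob_space M"
    and Xm: "X \<in> borel_measurable M" and sq: "integrable M (\<lambda>\<omega>. (X \<omega>)\<^sup>2)" and v: "var M X \<noteq> 0"
  shows "distr L1 borel Z1 = distr L2 borel Z2"
proof -
  interpret L1: prob_space L1 by (rule L1)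
  interpret L2: prob_space L2 by (rule L2)
  have Z1m: "Z1 \<in> borel_measurable L1" using Z1 by (simp add: zero_bias_def)
  have Z2m: "Z2 \<in> borel_measurable L2" using Z2 by (simp add: zero_bias_def)
  have rd1: "real_distribution (distr L1 borel Z1)"
    unfolding real_distribution_def real_distribution_axioms_def
    using L1.prob_space_distr[OF Z1m] by simp
  have rd2: "real_distribution (distr L2 borel Z2)"
    unfolding real_distribution_def real_distribution_axioms_def
    using L2.prob_space_distr[OF Z2m] by simp
  have "char (distr L1 borel Z1) t = char (distr L2 borel Z2) t" for t
  proof (cases "t = 0")
    case True
    then show ?thesis using real_distribution.char_zero[OF rd1] real_distribution.char_zero[OF rd2] by simp
  next
    case False
    note a = zb_trig[OF Z1 L1 M Xm sq False] zb_trig[OF Z2 L2 M Xm sq False]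
    show ?thesis
    proof (rule complex_eqI)
      show "Re (char (distr L1 borel Z1) t) = Re (char (distr L2 borel Z2) t)"
        unfolding char_distr_Re[OF L1 Z1m] char_distr_Re[OF L2 Z2m] using a(1) a(3) v by simp
      show "Im (char (distr L1 borel Z1) t) = Im (char (distr L2 borel Z2) t)"
        unfolding char_distr_Re[OF L1 Z1m] char_distr_Re[OF L2 Z2m] using a(2) a(4) v by simp
    qed
  qed
  then show ?thesis using Levy_uniqueness[OF rd1 rd2] by blast
qed



lemma dzb_zb:
  assumes Y: "dir_zero_bias M X i N Y"
  shows "zero_bias M (X i) N (\<lambda>\<omega>. Y \<omega> $ i)"
  unfolding zero_bias_def
proof (intro conjI allI impI)
  have Ym: "Y \<in> borel_measurable N" using Y by (simp add: dir_zero_bias_def)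
  show "(\<lambda>\<omega>. Y \<omega> $ i) \<in> borel_measurable N" using measurable_compose[OF Ym borel_measurable_nth] .
  fix f f' :: "real \<Rightarrow> real"
  assume fm: "f \<in> borel_measurable borel" and f'm: "f' \<in> borel_measurable borel"
    and der: "\<forall>x. (f has_real_derivative f' x) (at x)"
    and i1: "integrable M (\<lambda>\<omega>. X i \<omega> * f (X i \<omega>))" and i2: "integrable N (\<lambda>\<omega>. f' (Y \<omega> $ i))"
  have "(\<lambda>x::real^_. f (x $ i)) \<in> borel_measurable borel" using fm by measurable
  moreover have "(\<lambda>x::real^_. f' (x $ i)) \<in> borel_measurable borel" using f'm by measurable
  moreover have "\<forall>x. ((\<lambda>t. f (upd x i t $ i)) has_real_derivative f' (x $ i)) (at (x $ i))"
    using der by (simp add: upd_def)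
  ultimately show "(\<integral>\<omega>. X i \<omega> * f (X i \<omega>) \<partial>M) = var M (X i) * (\<integral>\<omega>. f' (Y \<omega> $ i) \<partial>N)"
    using Y i1 i2 unfolding dir_zero_bias_def by force
qed

lemma var_scale: "var M (\<lambda>\<omega>. a * X \<omega>) = a\<^sup>2 * var M X"
proof -
  have "(\<lambda>\<omega>. (a * X \<omega> - (\<integral>\<omega>'. a * X \<omega>' \<partial>M))\<^sup>2) = (\<lambda>\<omega>. a\<^sup>2 * (X \<omega> - (\<integral>\<omega>'. X \<omega>' \<partial>M))\<^sup>2)"
    by (simp add: power2_eq_square algebra_simps)
  then show ?thesis unfolding var_def by simp
qed

lemma zb_scale:
  assumes ZB: "zero_bias M X N Z"
  shows "zero_bias M (\<lambda>\<omega>. a * X \<omega>) N (\<lambda>\<omega>. a * Z \<omega>)"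
  unfolding zero_bias_def
proof (intro conjI allI impI)
  have "Z \<in> borel_measurable N" using ZB by (simp add: zero_bias_def)
  then show "(\<lambda>\<omega>. a * Z \<omega>) \<in> borel_measurable N" by measurable
  fix f f' :: "real \<Rightarrow> real"
  assume fm: "f \<in> borel_measurable borel" and f'm: "f' \<in> borel_measurable borel"
    and der: "\<forall>x. (f has_real_derivative f' x) (at x)"
    and i1: "integrable M (\<lambda>\<omega>. a * X \<omega> * f (a * X \<omega>))" and i2: "integrable N (\<lambda>\<omega>. f' (a * Z \<omega>))"
  have "(\<lambda>x. a * f (a * x)) \<in> borel_measurable borel" using fm by measurable
  moreover have "(\<lambda>x. a\<^sup>2 * f' (a * x)) \<in> borel_measurable borel" using f'm by measurable
  moreover have "\<forall>x. ((\<lambda>x. a * f (a * x)) has_real_derivative a\<^sup>2 * f' (a * x)) (at x)"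
  proof
    fix x
    have "((\<lambda>x. f (a * x)) has_real_derivative f' (a * x) * a) (at x)"
      by (rule DERIV_chain2[where g="\<lambda>x. a * x", OF der[rule_format, of "a * x"]])
        (auto intro!: derivative_eq_intros)
    from DERIV_cmult[OF this, of a] show "((\<lambda>x. a * f (a * x)) has_real_derivative a\<^sup>2 * f' (a * x)) (at x)"
      by (simp add: power2_eq_square algebra_simps)
  qed
  moreover have "integrable M (\<lambda>\<omega>. X \<omega> * (a * f (a * X \<omega>)))"
    using i1 by (simp add: algebra_simps)
  moreover have "integrable N (\<lambda>\<omega>. a\<^sup>2 * f' (a * Z \<omega>))"
    using i2 by simp
  ultimately have "(\<integral>\<omega>. X \<omega> * (a * f (a * X \<omega>)) \<partial>M) = var M X * (\<integral>\<omega>. a\<^sup>2 * f' (a * Z \<omega>) \<partial>N)"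
    using ZB unfolding zero_bias_def by blast
  then show "(\<integral>\<omega>. a * X \<omega> * f (a * X \<omega>) \<partial>M) = var M (\<lambda>\<omega>. a * X \<omega>) * (\<integral>\<omega>. f' (a * Z \<omega>) \<partial>N)"
    by (simp add: var_scale algebra_simps)
qed



lemma item2:
  fixes M :: "'a measure" and X :: "'n::finite \<Rightarrow> 'a \<Rightarrow> real"
    and i :: 'n and N :: "'b measure" and Y :: "'b \<Rightarrow> real ^ 'n"
  assumes M: "prob_space M" and Y: "dir_zero_bias M X i N Y" and N: "prob_space N" and ji: "j \<noteq> i"
   and mi: "X i \<in> borel_measurable M" and mj: "X j \<in> borel_measurable M"
   and sq: "integrable M (\<lambda>\<omega>. (X i \<omega>)\<^sup>2)" and vp: "var M (X i) > 0"
   and D: "distributed M (lborel \<Otimes>\<^sub>M lborel) (\<lambda>\<omega>. (X i \<omega>, X j \<omega>)) fij"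
  shows "distributed N lborel (\<lambda>\<omega>. Y \<omega> $ j)
          (\<lambda>y. \<integral>\<^sup>+ x. ennreal (x\<^sup>2 / var M (X i)) * fij (x, y) \<partial>lborel)"
proof -
  interpret N: prob_space N by (rule N)
  interpret M: prob_space M by (rule M)
  define s where "s = var M (X i)"
  have s: "s > 0" using vp by (simp add: s_def)
  have fm[measurable]: "fij \<in> borel_measurable (lborel \<Otimes>\<^sub>M lborel)" using D by (simp add: distributed_def)
  have Dd: "distr M (lborel \<Otimes>\<^sub>M lborel) (\<lambda>\<omega>. (X i \<omega>, X j \<omega>)) = density (lborel \<Otimes>\<^sub>M lborel) fij"
    using D by (simp add: distributed_def)
  have Ym: "Y \<in> borel_measurable N" using Y by (simp add: dir_zero_bias_def)
  have Yjm: "(\<lambda>\<omega>. Y \<omega> $ j) \<in> borel_measurable N" using measurable_compose[OF Ym borel_measurable_nth] .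
  define h where "h = (\<lambda>y. \<integral>\<^sup>+ x. ennreal (x\<^sup>2 / s) * fij (x, y) \<partial>lborel)"
  have hm: "h \<in> borel_measurable lborel"
    unfolding h_def by measurable
  have eq: "distr N lborel (\<lambda>\<omega>. Y \<omega> $ j) = density lborel h"
  proof (rule measure_eqI)
    show "sets (distr N lborel (\<lambda>\<omega>. Y \<omega> $ j)) = sets (density lborel h)" by simp
    fix A assume "A \<in> sets (distr N lborel (\<lambda>\<omega>. Y \<omega> $ j))"
    then have A[measurable]: "A \<in> sets borel" by simp
    have c: "(\<integral>\<omega>. (X i \<omega>)\<^sup>2 * indicator A (X j \<omega>) \<partial>M)
       = s * measure (distr N borel (\<lambda>\<omega>. Y \<omega> $ j)) A"
      unfolding s_def by (rule dzb_coord[OF Y N ji mi mj sq A])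
    have int: "integrable M (\<lambda>\<omega>. (X i \<omega>)\<^sup>2 / s * indicator A (X j \<omega>))"
      by (rule Bochner_Integration.integrable_bound[OF integrable_divide[OF sq, of s]])
        (use A mi mj s in \<open>auto simp: indicator_def\<close>)
    have "emeasure (distr N lborel (\<lambda>\<omega>. Y \<omega> $ j)) A = emeasure (distr N borel (\<lambda>\<omega>. Y \<omega> $ j)) A"
      using Yjm A by (simp add: emeasure_distr)
    also have "\<dots> = ennreal (measure (distr N borel (\<lambda>\<omega>. Y \<omega> $ j)) A)"
      using prob_space.finite_measure[OF N.prob_space_distr[OF Yjm]] finite_measure.emeasure_eq_measure by blast
    also have "\<dots> = ennreal (\<integral>\<omega>. (X i \<omega>)\<^sup>2 / s * indicator A (X j \<omega>) \<partial>M)"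
      using c s by simp
    also have "\<dots> = (\<integral>\<^sup>+\<omega>. ennreal ((X i \<omega>)\<^sup>2 / s * indicator A (X j \<omega>)) \<partial>M)"
      by (rule nn_integral_eq_integral[symmetric, OF int]) (use s in auto)
    also have "\<dots> = (\<integral>\<^sup>+z. ennreal ((fst z)\<^sup>2 / s * indicator A (snd z)) \<partial>distr M (lborel \<Otimes>\<^sub>M lborel) (\<lambda>\<omega>. (X i \<omega>, X j \<omega>)))"
      by (subst nn_integral_distr) (use mi mj in \<open>auto simp: measurable_pair_iff\<close>)
    also have "\<dots> = (\<integral>\<^sup>+z. fij z * ennreal ((fst z)\<^sup>2 / s * indicator A (snd z)) \<partial>(lborel \<Otimes>\<^sub>M lborel))"
      unfolding Dd by (subst nn_integral_density) auto
    also have "\<dots> = (\<integral>\<^sup>+y. (\<integral>\<^sup>+x. fij (x, y) * ennreal (x\<^sup>2 / s * indicator A y) \<partial>lborel) \<partial>lborel)"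
      by (subst pair_sigma_finite.nn_integral_snd[symmetric]) (auto simp: pair_sigma_finite_def lborel.sigma_finite_measure_axioms)
    also have "\<dots> = (\<integral>\<^sup>+y. h y * indicator A y \<partial>lborel)"
      unfolding h_def
      by (rule nn_integral_cong, subst nn_integral_multc[symmetric])
         (auto intro!: nn_integral_cong simp: indicator_def mult.commute)
    also have "\<dots> = emeasure (density lborel h) A"
      using hm A by (simp add: emeasure_density)
    finally show "emeasure (distr N lborel (\<lambda>\<omega>. Y \<omega> $ j)) A = emeasure (density lborel h) A" .
  qed
  show ?thesis
    unfolding distributed_def using eq hm Yjm by (simp add: h_def s_def)
qed


theorem proposition2p3:
  fixes M :: "'a measure" and X :: "'n::finite \<Rightarrow> 'a \<Rightarrow> real"
    and i :: 'n and N :: "'b measure" and Y :: "'b \<Rightarrow> real ^ 'n"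
  assumes M: "prob_space M"
    and meas: "\<And>k. X k \<in> borel_measurable M"
    and sq_int: "\<And>k. integrable M (\<lambda>\<omega>. (X k \<omega>)\<^sup>2)"
    and mean0: "\<And>k. (\<integral>\<omega>. X k \<omega> \<partial>M) = 0"
    and varpos: "\<And>k. var M (X k) > 0"
    and N: "prob_space N"
    and Y: "dir_zero_bias M X i N Y"
  shows
    \<comment> \<open>1.\<close>
    "(zero_bias M (X i) N (\<lambda>\<omega>. Y \<omega> $ i) \<and>
      (\<forall>(L :: 'c measure) Z. prob_space L \<longrightarrow> zero_bias M (X i) L Z \<longrightarrow>
          distr N borel (\<lambda>\<omega>. Y \<omega> $ i) = distr L borel Z))
     \<and>
     \<comment> \<open>2.\<close>
     (\<forall>g j fij. distributed M lborel (\<lambda>\<omega>. \<chi> k. X k \<omega>) g \<longrightarrow> j \<noteq> i \<longrightarrow>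
        distributed M (lborel \<Otimes>\<^sub>M lborel) (\<lambda>\<omega>. (X i \<omega>, X j \<omega>)) fij \<longrightarrow>
        distributed N lborel (\<lambda>\<omega>. Y \<omega> $ j)
          (\<lambda>y. \<integral>\<^sup>+ x. ennreal (x\<^sup>2 / var M (X i)) * fij (x, y) \<partial>lborel))
     \<and>
     \<comment> \<open>3.\<close>
     (\<forall>j. prob_space.indep_var M borel (X i) borel (X j) \<longrightarrow>
        distr N borel (\<lambda>\<omega>. Y \<omega> $ j) = distr M borel (X j))
     \<and>
     \<comment> \<open>4.\<close>
     (\<forall>j (a::real). a \<noteq> 0 \<longrightarrow>
        (\<forall>(N' :: 'd measure) Y'. prob_space N' \<longrightarrow>
           dir_zero_bias M (X(j := (\<lambda>\<omega>. a * X j \<omega>))) i N' Y' \<longrightarrow>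
           distr N' borel (\<lambda>\<omega>. Y' \<omega> $ j) = distr N borel (\<lambda>\<omega>. a * Y \<omega> $ j)))"
proof -
  interpret M: prob_space M by (rule M)
  interpret N: prob_space N by (rule N)
  have vX: "\<And>k. var M (X k) = (\<integral>\<omega>. (X k \<omega>)\<^sup>2 \<partial>M)" using var_mean0[OF mean0] by blast
  have Ym: "Y \<in> borel_measurable N" using Y by (simp add: dir_zero_bias_def)
  have Yjm: "\<And>j. (\<lambda>\<omega>. Y \<omega> $ j) \<in> borel_measurable N"
    using measurable_compose[OF Ym borel_measurable_nth] by blast
  have zb: "zero_bias M (X i) N (\<lambda>\<omega>. Y \<omega> $ i)" by (rule dzb_zb[OF Y])
  have P1: "\<forall>(L :: 'c measure) Z. prob_space L \<longrightarrow> zero_bias M (X i) L Z \<longrightarrow>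
          distr N borel (\<lambda>\<omega>. Y \<omega> $ i) = distr L borel Z"
  proof (intro allI impI)
    fix L :: "'c measure" and Z assume L: "prob_space L" and z: "zero_bias M (X i) L Z"
    show "distr N borel (\<lambda>\<omega>. Y \<omega> $ i) = distr L borel Z"
      by (rule zb_unique[OF zb N z L M meas sq_int]) (use varpos[of i] in simp)
  qed
  have P2: "\<forall>g j fij. distributed M lborel (\<lambda>\<omega>. \<chi> k. X k \<omega>) g \<longrightarrow> j \<noteq> i \<longrightarrow>
        distributed M (lborel \<Otimes>\<^sub>M lborel) (\<lambda>\<omega>. (X i \<omega>, X j \<omega>)) fij \<longrightarrow>
        distributed N lborel (\<lambda>\<omega>. Y \<omega> $ j)
          (\<lambda>y. \<integral>\<^sup>+ x. ennreal (x\<^sup>2 / var M (X i)) * fij (x, y) \<partial>lborel)"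
    by (intro allI impI item2[OF M Y N _ meas meas sq_int varpos])
  have P3: "\<forall>j. prob_space.indep_var M borel (X i) borel (X j) \<longrightarrow>
        distr N borel (\<lambda>\<omega>. Y \<omega> $ j) = distr M borel (X j)"
  proof (intro allI impI)
    fix j assume ind: "M.indep_var borel (X i) borel (X j)"
    show "distr N borel (\<lambda>\<omega>. Y \<omega> $ j) = distr M borel (X j)"
    proof (cases "j = i")
      case False
      show ?thesis
      proof (rule prob_distr_eqI[OF N M Yjm meas])
        fix A :: "real set" assume A: "A \<in> sets borel"
        have c: "(\<integral>\<omega>. (X i \<omega>)\<^sup>2 * indicator A (X j \<omega>) \<partial>M) = var M (X i) * measure (distr N borel (\<lambda>\<omega>. Y \<omega> $ j)) A"
          by (rule dzb_coord[OF Y N False meas meas sq_int A])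
        have ind2: "M.indep_var borel (\<lambda>\<omega>. (X i \<omega>)\<^sup>2) borel (\<lambda>\<omega>. indicator A (X j \<omega>) :: real)"
          using M.indep_var_compose[OF ind, of "\<lambda>x. x\<^sup>2" borel "indicator A" borel] A
          by (simp add: comp_def)
        have ii: "integrable M (\<lambda>\<omega>. indicator A (X j \<omega>) :: real)"
          by (rule M.integrable_const_bound[where B=1]) (use A meas in auto)
        have "(\<integral>\<omega>. (X i \<omega>)\<^sup>2 * indicator A (X j \<omega>) \<partial>M) = var M (X i) * (\<integral>\<omega>. indicator A (X j \<omega>) \<partial>M)"
          using M.indep_var_lebesgue_integral[OF ind2 sq_int ii] vX by simp
        also have "(\<integral>\<omega>. (indicator A (X j \<omega>) :: real) \<partial>M) = measure (distr M borel (X j)) A"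
        proof -
          have "(\<integral>\<omega>. (indicator A (X j \<omega>) :: real) \<partial>M) = (\<integral>x. indicator A x \<partial>distr M borel (X j))"
            by (subst integral_distr) (use meas A in auto)
          then show ?thesis by simp
        qed
        finally show "measure (distr N borel (\<lambda>\<omega>. Y \<omega> $ j)) A = measure (distr M borel (X j)) A"
          using c varpos[of i] by simp
      qed
    next
      case True
      have False
      proof -
        define E where "E = {\<omega>\<in>space M. 0 < X i \<omega>}"
        have E: "E \<in> sets M" unfolding E_def using meas by measurable
        have "M.prob ((\<lambda>x. (X i x, X i x)) -` ({0<..} \<times> {0<..}) \<inter> space M) =
            M.prob (X i -` {0<..} \<inter> space M) * M.prob (X i -` {0<..} \<inter> space M)"
          by (rule M.indep_varD[OF ind[unfolded True]]) auto
        moreover have "(\<lambda>x. (X i x, X i x)) -` ({0<..} \<times> {0<..}) \<inter> space M = E"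
          "X i -` {0<..} \<inter> space M = E" unfolding E_def by auto
        ultimately have "M.prob E = M.prob E * M.prob E" by simp
        then have "M.prob E * (1 - M.prob E) = 0" by (simp add: algebra_simps)
        then have "M.prob E = 0 \<or> M.prob E = 1" by simp
        then have sgn: "(AE \<omega> in M. X i \<omega> \<le> 0) \<or> (AE \<omega> in M. 0 \<le> X i \<omega>)"
        proof
          assume "M.prob E = 0"
          then have "AE \<omega> in M. \<omega> \<notin> E" using M.prob_eq_0[OF E] by simp
          then have "AE \<omega> in M. X i \<omega> \<le> 0" using AE_space by eventually_elim (auto simp: E_def)
          then show ?thesis ..
        next
          assume "M.prob E = 1"
          then have "AE \<omega> in M. \<omega> \<in> E" using M.prob_eq_1[OF E] by simp
          then have "AE \<omega> in M. 0 \<le> X i \<omega>" using AE_space by eventually_elim (auto simp: E_def)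
          then show ?thesis ..
        qed
        have Xint: "integrable M (X i)" using M.square_integrable_imp_integrable[OF meas sq_int] .
        have "AE \<omega> in M. X i \<omega> = 0"
          using sgn
        proof
          assume a: "AE \<omega> in M. X i \<omega> \<le> 0"
          have a': "AE \<omega> in M. 0 \<le> - X i \<omega>" using a by eventually_elim simp
          have "(\<integral>\<omega>. - X i \<omega> \<partial>M) = 0" using mean0[of i] by simp
          then have "AE \<omega> in M. - X i \<omega> = 0"
            using integral_nonneg_eq_0_iff_AE[of M "\<lambda>\<omega>. - X i \<omega>", OF integrable_minus[OF Xint] a'] by blast
          then show ?thesis by eventually_elim simp
        next
          assume a: "AE \<omega> in M. 0 \<le> X i \<omega>"
          show ?thesis
            using integral_nonneg_eq_0_iff_AE[of M "X i", OF Xint a] mean0[of i] by blast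
        qed
        then have "(\<integral>\<omega>. (X i \<omega>)\<^sup>2 \<partial>M) = (\<integral>\<omega>. 0 \<partial>M)"
          by (intro integral_cong_AE) (use meas in auto)
        then show False using varpos[of i] vX[of i] by simp
      qed
      then show ?thesis ..
    qed
  qed
  have P4: "\<forall>j (a::real). a \<noteq> 0 \<longrightarrow>
        (\<forall>(N' :: 'd measure) Y'. prob_space N' \<longrightarrow>
           dir_zero_bias M (X(j := (\<lambda>\<omega>. a * X j \<omega>))) i N' Y' \<longrightarrow>
           distr N' borel (\<lambda>\<omega>. Y' \<omega> $ j) = distr N borel (\<lambda>\<omega>. a * Y \<omega> $ j))"
  proof (intro allI impI)
    fix j and a :: real and N' :: "'d measure" and Y'
    assume a: "a \<noteq> 0" and N': "prob_space N'" and Y': "dir_zero_bias M (X(j := (\<lambda>\<omega>. a * X j \<omega>))) i N' Y'"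
    interpret N': prob_space N' by (rule N')
    have Y'm: "Y' \<in> borel_measurable N'" using Y' by (simp add: dir_zero_bias_def)
    have Y'jm: "(\<lambda>\<omega>. Y' \<omega> $ j) \<in> borel_measurable N'"
      using measurable_compose[OF Y'm borel_measurable_nth] by blast
    show "distr N' borel (\<lambda>\<omega>. Y' \<omega> $ j) = distr N borel (\<lambda>\<omega>. a * Y \<omega> $ j)"
    proof (cases "j = i")
      case True
      have z1: "zero_bias M (\<lambda>\<omega>. a * X i \<omega>) N' (\<lambda>\<omega>. Y' \<omega> $ i)"
        using dzb_zb[OF Y'] True by simp
      have z2: "zero_bias M (\<lambda>\<omega>. a * X i \<omega>) N (\<lambda>\<omega>. a * Y \<omega> $ i)"
        by (rule zb_scale[OF zb])
      have "distr N' borel (\<lambda>\<omega>. Y' \<omega> $ i) = distr N borel (\<lambda>\<omega>. a * Y \<omega> $ i)"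
      proof (rule zb_unique[OF z1 N' z2 N M])
        show "(\<lambda>\<omega>. a * X i \<omega>) \<in> borel_measurable M" using meas[of i] by measurable
        show "integrable M (\<lambda>\<omega>. (a * X i \<omega>)\<^sup>2)"
          using sq_int[of i] by (simp add: power_mult_distrib)
        show "var M (\<lambda>\<omega>. a * X i \<omega>) \<noteq> 0"
          using a varpos[of i] by (simp add: var_scale)
      qed
      then show ?thesis using True by simp
    next
      case False
      have aYm: "(\<lambda>\<omega>. a * Y \<omega> $ j) \<in> borel_measurable N" using Yjm[of j] by measurable
      show ?thesis
      proof (rule prob_distr_eqI[OF N' N Y'jm aYm])
        fix A :: "real set" assume A: "A \<in> sets borel"
        have "(\<lambda>y::real. a * y) -` A \<inter> space borel \<in> sets borel"
          by (rule measurable_sets[OF _ A]) measurable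
        then have A': "(\<lambda>y. a * y) -` A \<in> sets borel" by simp
        have c1: "(\<integral>\<omega>. ((X(j := (\<lambda>\<omega>. a * X j \<omega>))) i \<omega>)\<^sup>2 * indicator A ((X(j := (\<lambda>\<omega>. a * X j \<omega>))) j \<omega>) \<partial>M)
            = var M ((X(j := (\<lambda>\<omega>. a * X j \<omega>))) i) * measure (distr N' borel (\<lambda>\<omega>. Y' \<omega> $ j)) A"
          by (rule dzb_coord[OF Y' N' False]) (use False meas[of i] meas[of j] sq_int[of i] A in auto)
        have c2: "(\<integral>\<omega>. (X i \<omega>)\<^sup>2 * indicator ((\<lambda>y. a * y) -` A) (X j \<omega>) \<partial>M)
            = var M (X i) * measure (distr N borel (\<lambda>\<omega>. Y \<omega> $ j)) ((\<lambda>y. a * y) -` A)"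
          by (rule dzb_coord[OF Y N False meas meas sq_int A'])
        have "measure (distr N borel (\<lambda>\<omega>. Y \<omega> $ j)) ((\<lambda>y. a * y) -` A) = measure (distr N borel (\<lambda>\<omega>. a * Y \<omega> $ j)) A"
          using A A' Yjm[of j] aYm by (simp add: measure_distr vimage_def)
        then show "measure (distr N' borel (\<lambda>\<omega>. Y' \<omega> $ j)) A = measure (distr N borel (\<lambda>\<omega>. a * Y \<omega> $ j)) A"
          using c1 c2 False varpos[of i] by (simp add: indicator_def)
      qed
    qed
  qed
  show ?thesis by (intro conjI zb P1 P2 P3 P4)
qed

end
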